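(* Let $n\ge 1$ be an integer. The game value of \textsc{Snort} played on the star $K_{1,n}$ whose centre is tinted blue (and whose leaves are untinted) is $\{\, n \mid * \,\}$ if $n$ is even, and $\{\, n \mid 0 \,\}$ if $n$ is odd.
   Context: \textsc{Snort} is a two-player normal-play combinatorial game (the player unable to move loses) between Left (blue) and Right (red), played on a finite simple graph in which each vertex may be tinted blue, tinted red, or untinted. Left may move on any vertex not tinted red; Right may move on any vertex not tinted blue. A move on vertex $v$ deletes $v$ and tints all neighbours of $v$ in the mover's colour; any vertex that thereby becomes tinted in both colours is deleted. (This is equivalent to the original game in which players alternately colour vertices and may not colour a vertex adjacent to an opponent-coloured vertex.) Game values are in the standard sense of combinatorial game theory: $\{A \mid B\}$ denotes the game with Left options $A$ and Right options $B$, $0=\{\,\mid\,\}$, $*=\{0\mid 0\}$, and equality is the usual equality of games. $K_{1,n}$ is the star with one centre vertex adjacent to $n$ leaves. *)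

theory Defs
  imports Main
begin

datatype game = Game (left_opts: "game list") (right_opts: "game list")

function game_le :: "game \<Rightarrow> game \<Rightarrow> bool" where
  "game_le (Game GL GR) (Game HL HR) \<longleftrightarrow>
     (\<forall>gl \<in> set GL. \<not> game_le (Game HL HR) gl) \<and>
     (\<forall>hr \<in> set HR. \<not> game_le hr (Game GL GR))"
  by pat_completeness auto
termination
  by (relation "measure (\<lambda>(G, H). size G + size H)")
     (auto dest!: size_list_estimation' [where f = size and y = "size _", OF _ order_refl]
           simp: size_list_estimation')

definition game_eq :: "game \<Rightarrow> game \<Rightarrow> bool" where
  "game_eq G H \<longleftrightarrow> game_le G H \<and> game_le H G"

definition zero_game :: game where "zero_game = Game [] []"
definition star_game :: game where "star_game = Game [zero_game] [zero_game]"

primrec nat_game :: "nat \<Rightarrow> game" where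
  "nat_game 0 = zero_game"
| "nat_game (Suc k) = Game [nat_game k] []"

datatype tint = Untinted | Blue | Red

datatype player = LeftP | RightP

definition colour :: "player \<Rightarrow> tint" where
  "colour p = (case p of LeftP \<Rightarrow> Blue | RightP \<Rightarrow> Red)"

definition opp_colour :: "player \<Rightarrow> tint" where
  "opp_colour p = (case p of LeftP \<Rightarrow> Red | RightP \<Rightarrow> Blue)"

text \<open>A position: a fixed symmetric irreflexive edge relation E (on the
  ambient vertex type), the finite set V of remaining vertices, and a tint
  function.\<close>
definition legal :: "player \<Rightarrow> 'a set \<Rightarrow> ('a \<Rightarrow> tint) \<Rightarrow> 'a \<Rightarrow> bool" where
  "legal p V t v \<longleftrightarrow> v \<in> V \<and> t v \<noteq> opp_colour p"

text \<open>Moving on v deletes v, tints the neighbours of v in the mover's colour,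
  and deletes neighbours that thereby become tinted in both colours (i.e.
  those that were tinted in the opponent's colour).\<close>
definition move_V :: "('a \<Rightarrow> 'a \<Rightarrow> bool) \<Rightarrow> player \<Rightarrow> 'a set \<Rightarrow> ('a \<Rightarrow> tint) \<Rightarrow> 'a \<Rightarrow> 'a set" where
  "move_V E p V t v = {u \<in> V. u \<noteq> v \<and> \<not> (E v u \<and> t u = opp_colour p)}"

definition move_t :: "('a \<Rightarrow> 'a \<Rightarrow> bool) \<Rightarrow> player \<Rightarrow> ('a \<Rightarrow> tint) \<Rightarrow> 'a \<Rightarrow> ('a \<Rightarrow> tint)" where
  "move_t E p t v = (\<lambda>u. if E v u then colour p else t u)"

text \<open>Game value computed with a fuel parameter (number of vertices);
  each move removes at least one vertex, so fuel = card V suffices.\<close>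
primrec snort_aux :: "('a::linorder \<Rightarrow> 'a \<Rightarrow> bool) \<Rightarrow> nat \<Rightarrow> 'a set \<Rightarrow> ('a \<Rightarrow> tint) \<Rightarrow> game" where
  "snort_aux E 0 V t = Game [] []"
| "snort_aux E (Suc k) V t =
     Game (map (\<lambda>v. snort_aux E k (move_V E LeftP V t v) (move_t E LeftP t v))
               (filter (legal LeftP V t) (sorted_list_of_set V)))
          (map (\<lambda>v. snort_aux E k (move_V E RightP V t v) (move_t E RightP t v))
               (filter (legal RightP V t) (sorted_list_of_set V)))"

definition snort_value :: "('a::linorder \<Rightarrow> 'a \<Rightarrow> bool) \<Rightarrow> 'a set \<Rightarrow> ('a \<Rightarrow> tint) \<Rightarrow> game" where
  "snort_value E V t = snort_aux E (card V) V t"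

text \<open>The star K_{1,n}: centre 0, leaves 1..n.\<close>
definition star_edges :: "nat \<Rightarrow> nat \<Rightarrow> bool" where
  "star_edges u v \<longleftrightarrow> (u = 0 \<and> v \<noteq> 0) \<or> (v = 0 \<and> u \<noteq> 0)"

definition star_centre_blue :: "nat \<Rightarrow> tint" where
  "star_centre_blue u = (if u = 0 then Blue else Untinted)"

end

theory Submission
  imports Defs
begin

primrec iso_u :: "nat \<Rightarrow> game" where
  "iso_u 0 = Game [] []"
| "iso_u (Suc k) = Game (replicate (Suc k) (iso_u k)) (replicate (Suc k) (iso_u k))"

primrec iso_b :: "nat \<Rightarrow> game" where
  "iso_b 0 = Game [] []"
| "iso_b (Suc k) = Game (replicate (Suc k) (iso_b k)) []"

primrec star_b :: "nat \<Rightarrow> game" where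
  "star_b 0 = Game [iso_b 0] []"
| "star_b (Suc k) = Game (iso_b (Suc k) # replicate (Suc k) (star_b k)) (replicate (Suc k) (iso_u k))"

lemma map_const_on:
  "(\<forall>x\<in>set xs. f x = c) \<Longrightarrow> map f xs = replicate (length xs) c"
  by (induct xs) auto

lemma le_L: "game_le G H \<Longrightarrow> gl \<in> set (left_opts G) \<Longrightarrow> \<not> game_le H gl"
  by (cases G; cases H) auto

lemma le_R: "game_le G H \<Longrightarrow> hr \<in> set (right_opts H) \<Longrightarrow> \<not> game_le hr G"
  by (cases G; cases H) auto

lemma le_I: "(\<forall>gl\<in>set (left_opts G). \<not> game_le H gl) \<Longrightarrow> (\<forall>hr\<in>set (right_opts H). \<not> game_le hr G) \<Longrightarrow> game_le G H"
  by (cases G; cases H) auto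

lemma b_n: "game_le (iso_b k) (nat_game k) \<and> game_le (nat_game k) (iso_b k)"
  by (induct k) (auto simp: zero_game_def dest: le_L le_R)

lemma n_b: "\<not> game_le (nat_game (Suc k)) (iso_b k)"
  using b_n[of k] by (auto dest: le_L le_R)

lemma s_n: "game_le (star_b k) (nat_game (Suc k))"
proof (induct k)
  case 0
  then show ?case by (simp add: zero_game_def)
next
  case (Suc k)
  have "\<not> game_le (nat_game (Suc (Suc k))) (star_b k)"
    using Suc by (auto dest: le_L le_R)
  then show ?case using n_b[of "Suc k"] by simp
qed

lemma u_props:
  "(even k \<longrightarrow> game_le (iso_u k) zero_game \<and> game_le zero_game (iso_u k)
      \<and> \<not> game_le star_game (iso_u k) \<and> \<not> game_le (iso_u k) star_game) \<and>
   (odd k \<longrightarrow> game_le (iso_u k) star_game \<and> game_le star_game (iso_u k)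
      \<and> \<not> game_le zero_game (iso_u k) \<and> \<not> game_le (iso_u k) zero_game)"
proof (induct k)
  case 0
  then show ?case by (simp add: zero_game_def star_game_def)
next
  case (Suc k)
  then show ?case by (cases "even k") (auto simp: zero_game_def star_game_def dest: le_L le_R)
qed

lemma snort_iso_u:
  "finite L \<Longrightarrow> 0 \<notin> L \<Longrightarrow> (\<forall>u\<in>L. t u = Untinted) \<Longrightarrow> card L \<le> f \<Longrightarrow>
   snort_aux star_edges f L t = iso_u (card L)"
proof (induct f arbitrary: L t)
  case 0
  then show ?case by simp
next
  case (Suc f)
  show ?case
  proof (cases "L = {}")
    case True
    then show ?thesis by simp
  next
    case False
    then obtain m where m: "card L = Suc m" using Suc.prems
      by (metis card_0_eq not0_implies_Suc)
    have fl: "filter (legal p L t) (sorted_list_of_set L) = sorted_list_of_set L" for p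
      using Suc.prems by (auto simp: filter_id_conv legal_def opp_colour_def split: player.splits)
    have mv: "snort_aux star_edges f (move_V star_edges p L t v) (move_t star_edges p t v) = iso_u m"
      if "v \<in> L" for p v
    proof -
      have V: "move_V star_edges p L t v = L - {v}"
        using Suc.prems that by (auto simp: move_V_def star_edges_def opp_colour_def split: player.splits)
      show ?thesis unfolding V
        using Suc.prems that m
        by (subst Suc.hyps) (auto simp: move_t_def star_edges_def)
    qed
    show ?thesis unfolding m
      by (simp add: fl, intro conjI; subst map_const_on[where c="iso_u m"])
         (use mv m Suc.prems in auto)
  qed
qed

lemma snort_iso_b:
  "finite L \<Longrightarrow> 0 \<notin> L \<Longrightarrow> (\<forall>u\<in>L. t u = Blue) \<Longrightarrow> card L \<le> f \<Longrightarrow>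
   snort_aux star_edges f L t = iso_b (card L)"
proof (induct f arbitrary: L t)
  case 0
  then show ?case by simp
next
  case (Suc f)
  show ?case
  proof (cases "L = {}")
    case True
    then show ?thesis by simp
  next
    case False
    then obtain m where m: "card L = Suc m" using Suc.prems
      by (metis card_0_eq not0_implies_Suc)
    have fl: "filter (legal LeftP L t) (sorted_list_of_set L) = sorted_list_of_set L"
      using Suc.prems by (auto simp: filter_id_conv legal_def opp_colour_def)
    have fr: "filter (legal RightP L t) (sorted_list_of_set L) = []"
      using Suc.prems by (auto simp: filter_empty_conv legal_def opp_colour_def)
    have mv: "snort_aux star_edges f (move_V star_edges LeftP L t v) (move_t star_edges LeftP t v) = iso_b m"
      if "v \<in> L" for v
    proof -
      have V: "move_V star_edges LeftP L t v = L - {v}"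
        using Suc.prems that by (auto simp: move_V_def star_edges_def opp_colour_def split: player.splits)
      show ?thesis unfolding V
        using Suc.prems that m
        by (subst Suc.hyps) (auto simp: move_t_def star_edges_def)
    qed
    show ?thesis unfolding m
      by (simp add: fl fr, subst map_const_on[where c="iso_b m"])
         (use mv m Suc.prems in auto)
  qed
qed

lemma sorted_ins0:
  assumes "finite (L::nat set)" "0 \<notin> L"
  shows "sorted_list_of_set (insert 0 L) = 0 # sorted_list_of_set L"
proof -
  have "Min (insert 0 L) = 0" using assms by (simp add: Min_eq_iff)
  moreover have "insert 0 L - {0} = L" using assms by auto
  ultimately show ?thesis using assms sorted_list_of_set_nonempty[of "insert 0 L"] by simp
qed

lemma snort_star:
  "finite L \<Longrightarrow> 0 \<notin> L \<Longrightarrow> t 0 = Blue \<Longrightarrow> (\<forall>u\<in>L. t u = Untinted) \<Longrightarrow> Suc (card L) \<le> f \<Longrightarrow>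
   snort_aux star_edges f (insert 0 L) t = star_b (card L)"
proof (induct f arbitrary: L t)
  case 0
  then show ?case by simp
next
  case (Suc f)
  have so: "sorted_list_of_set (insert 0 L) = 0 # sorted_list_of_set L"
    using Suc.prems sorted_ins0 by blast
  have fl: "filter (legal LeftP (insert 0 L) t) (0 # sorted_list_of_set L) = 0 # sorted_list_of_set L"
    using Suc.prems by (auto simp: filter_id_conv legal_def opp_colour_def)
  have fr: "filter (legal RightP (insert 0 L) t) (0 # sorted_list_of_set L) = sorted_list_of_set L"
    using Suc.prems by (auto simp: filter_id_conv legal_def opp_colour_def)
  have c0: "snort_aux star_edges f (move_V star_edges LeftP (insert 0 L) t 0) (move_t star_edges LeftP t 0) = iso_b (card L)"
  proof -
    have V: "move_V star_edges LeftP (insert 0 L) t 0 = L"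
      using Suc.prems by (auto simp: move_V_def star_edges_def opp_colour_def) (metis gr0I)
    show ?thesis unfolding V
      using Suc.prems
      by (subst snort_iso_b) (auto simp: move_t_def star_edges_def colour_def)
  qed
  show ?case
  proof (cases "L = {}")
    case True
    then show ?thesis using c0 so fl fr by (simp only: snort_aux.simps list.map star_b.simps card.empty) simp
  next
    case False
    then obtain m where m: "card L = Suc m" using Suc.prems
      by (metis card_0_eq not0_implies_Suc)
    have mvl: "snort_aux star_edges f (move_V star_edges LeftP (insert 0 L) t v) (move_t star_edges LeftP t v) = star_b m"
      if "v \<in> L" for v
    proof -
      have V: "move_V star_edges LeftP (insert 0 L) t v = insert 0 (L - {v})"
        using Suc.prems that by (auto simp: move_V_def star_edges_def opp_colour_def)
      show ?thesis unfolding V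
        using Suc.prems that m
        by (subst Suc.hyps) ((auto simp: move_t_def star_edges_def colour_def), (metis gr0I)+)
    qed
    have mvr: "snort_aux star_edges f (move_V star_edges RightP (insert 0 L) t v) (move_t star_edges RightP t v) = iso_u m"
      if "v \<in> L" for v
    proof -
      have V: "move_V star_edges RightP (insert 0 L) t v = L - {v}"
        using Suc.prems that by (auto simp: move_V_def star_edges_def opp_colour_def)
      show ?thesis unfolding V
        using Suc.prems that m
        by (subst snort_iso_u) (auto simp: move_t_def star_edges_def colour_def intro: gr0I)
    qed
    have A: "map (\<lambda>v. snort_aux star_edges f (move_V star_edges LeftP (insert 0 L) t v) (move_t star_edges LeftP t v)) (sorted_list_of_set L) = replicate (Suc m) (star_b m)"
      using Suc.prems m mvl by (subst map_const_on[where c="star_b m"]) auto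
    have B: "map (\<lambda>v. snort_aux star_edges f (move_V star_edges RightP (insert 0 L) t v) (move_t star_edges RightP t v)) (sorted_list_of_set L) = replicate (Suc m) (iso_u m)"
      using Suc.prems m mvr by (subst map_const_on[where c="iso_u m"]) auto
    show ?thesis unfolding m using A B c0 m
      by (simp only: snort_aux.simps so fl fr list.map star_b.simps)
  qed
qed

lemma value_star: "snort_value star_edges {0..n} star_centre_blue = star_b n"
proof -
  have "{0..n} = insert 0 {1..n}" by auto
  moreover have "card {0..n} = Suc (card {1..n})" by simp
  moreover have "snort_aux star_edges (Suc (card {1..n})) (insert 0 {1..n}) star_centre_blue = star_b (card {1..n})"
    by (rule snort_star) (auto simp: star_centre_blue_def)
  ultimately show ?thesis unfolding snort_value_def by simp
qed

theorem lemma2: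
  fixes n :: nat
  assumes "n \<ge> 1"
  shows "game_eq (snort_value star_edges {0..n} star_centre_blue)
           (if even n then Game [nat_game n] [star_game] else Game [nat_game n] [zero_game])"
proof -
  obtain k where k: "n = Suc k" using assms by (cases n) auto
  define R where "R = (if even n then star_game else zero_game)"
  have RU1: "game_le (iso_u k) R" and RU2: "game_le R (iso_u k)"
    using u_props[of k] k by (auto simp: R_def)
  have H: "(if even n then Game [nat_game n] [star_game] else Game [nat_game n] [zero_game]) = Game [nat_game n] [R]"
    by (simp add: R_def)
  have "game_le (star_b n) (Game [nat_game n] [R])"
  proof (rule le_I)
    show "\<forall>gl\<in>set (left_opts (star_b n)). \<not> game_le (Game [nat_game n] [R]) gl"
    proof
      fix gl assume "gl \<in> set (left_opts (star_b n))"
      then have "gl = iso_b n \<or> gl = star_b k" using k by auto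
      then show "\<not> game_le (Game [nat_game n] [R]) gl"
      proof
        assume "gl = iso_b n"
        then show ?thesis using b_n[of n] by (auto dest: le_L)
      next
        assume "gl = star_b k"
        then show ?thesis using s_n[of k] k by (auto dest: le_L)
      qed
    qed
    show "\<forall>hr\<in>set (right_opts (Game [nat_game n] [R])). \<not> game_le hr (star_b n)"
      using RU1 k by (auto dest: le_R)
  qed
  moreover have "game_le (Game [nat_game n] [R]) (star_b n)"
  proof (rule le_I)
    show "\<forall>gl\<in>set (left_opts (Game [nat_game n] [R])). \<not> game_le (star_b n) gl"
      using b_n[of n] k by (auto dest: le_L)
    show "\<forall>hr\<in>set (right_opts (star_b n)). \<not> game_le hr (Game [nat_game n] [R])"
      using RU2 k by (auto dest: le_R)
  qed
  ultimately show ?thesis unfolding H value_star game_eq_def by simp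
qed

end
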